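(* Let $(\mathcal{X},d)$ be a metric space, let $M>0$ be an integer, and let $x_o, x_1, \ldots, x_M, x_1', \ldots, x_M'$ be an $M$-configuration in $(\mathcal{X},d)$. Let $1 \le j \le M$ be any index and let $S \subset \{1,\ldots,M\}$ be any subset with $|S|>1$. Then the set $A = \{x_o, x_j'\} \cup \{x_i : i \in S\}$ has a nice $2$-clustering if and only if $j \notin S$.
   Context: A clustering of a set $A$ (with distance $d$) is a set of nonempty, pairwise disjoint subsets (clusters) whose union is $A$; a $k$-clustering is a clustering with exactly $k$ clusters. Write $x \sim_{\mathcal C} y$ if $x,y$ lie in the same cluster of $\mathcal C$, and $x \not\sim_{\mathcal C} y$ otherwise. A clustering $\mathcal C$ of $(A,d)$ is nice if for all $x,y,z\in A$: $d(y,x)<d(z,x)$ whenever $x\sim_{\mathcal C} y$ and $x\not\sim_{\mathcal C} z$. For an integer $M>0$, an $M$-configuration in a metric space $(\mathcal X,d)$ is a collection of $2M+1$ points $x_o, x_1,\ldots,x_M, x_1',\ldots,x_M'\in\mathcal X$ such that: (i) all pairwise distances among these points lie in $[1,2]$; (ii) $d(x_o,x_i)\in(3/2,2]$ and $d(x_o,x_i')\in(3/2,2]$ for all $i\ge 1$; (iii) $d(x_i,x_j), d(x_i',x_j'), d(x_i,x_j')\in[1,3/2]$ for all $i\neq j$, $i,j\ge1$; (iv) $d(x_i,x_i')>d(x_o,x_i)$ for all $i\ge 1$. *)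

theory Defs
  imports "HOL-Analysis.Analysis"
begin

definition clustering :: "'a set set \<Rightarrow> 'a set \<Rightarrow> bool" where
  "clustering C A \<longleftrightarrow>
     (\<forall>c\<in>C. c \<noteq> {}) \<and>
     (\<forall>c1\<in>C. \<forall>c2\<in>C. c1 \<noteq> c2 \<longrightarrow> c1 \<inter> c2 = {}) \<and>
     \<Union>C = A"

definition k_clustering :: "nat \<Rightarrow> 'a set set \<Rightarrow> 'a set \<Rightarrow> bool" where
  "k_clustering k C A \<longleftrightarrow> clustering C A \<and> finite C \<and> card C = k"

definition same_cluster :: "'a set set \<Rightarrow> 'a \<Rightarrow> 'a \<Rightarrow> bool" where
  "same_cluster C x y \<longleftrightarrow> (\<exists>c\<in>C. x \<in> c \<and> y \<in> c)"

definition nice_clustering :: "('a \<Rightarrow> 'a \<Rightarrow> real) \<Rightarrow> 'a set set \<Rightarrow> 'a set \<Rightarrow> bool" where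
  "nice_clustering d C A \<longleftrightarrow> clustering C A \<and>
     (\<forall>x\<in>A. \<forall>y\<in>A. \<forall>z\<in>A.
        same_cluster C x y \<and> \<not> same_cluster C x z \<longrightarrow> d y x < d z x)"

text \<open>M-configuration: points xo, x 1..x M, x' 1..x' M (labels; values at other indices irrelevant).\<close>
definition M_configuration ::
  "nat \<Rightarrow> 'a::metric_space \<Rightarrow> (nat \<Rightarrow> 'a) \<Rightarrow> (nat \<Rightarrow> 'a) \<Rightarrow> bool" where
  "M_configuration M xo x x' \<longleftrightarrow>
     \<comment> \<open>(i) all pairwise distances (between distinct labels) lie in [1,2]\<close>
     (\<forall>i\<in>{1..M}. dist xo (x i) \<in> {1..2} \<and> dist xo (x' i) \<in> {1..2}) \<and>
     (\<forall>i\<in>{1..M}. \<forall>k\<in>{1..M}. i \<noteq> k \<longrightarrow>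
         dist (x i) (x k) \<in> {1..2} \<and> dist (x' i) (x' k) \<in> {1..2}) \<and>
     (\<forall>i\<in>{1..M}. \<forall>k\<in>{1..M}. dist (x i) (x' k) \<in> {1..2}) \<and>
     \<comment> \<open>(ii)\<close>
     (\<forall>i\<in>{1..M}. dist xo (x i) \<in> {3/2<..2} \<and> dist xo (x' i) \<in> {3/2<..2}) \<and>
     \<comment> \<open>(iii)\<close>
     (\<forall>i\<in>{1..M}. \<forall>k\<in>{1..M}. i \<noteq> k \<longrightarrow>
         dist (x i) (x k) \<in> {1..3/2} \<and> dist (x' i) (x' k) \<in> {1..3/2} \<and>
         dist (x i) (x' k) \<in> {1..3/2}) \<and>
     \<comment> \<open>(iv)\<close>
     (\<forall>i\<in>{1..M}. dist (x i) (x' i) > dist xo (x i))"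

end

theory Submission
  imports Defs
begin

lemma two_clust_from:
  assumes "q \<in> c0" "c0 \<subseteq> A" "c0 \<noteq> A"
  shows "k_clustering 2 {c0, A - c0} A"
    and "\<And>u v. u \<in> A \<Longrightarrow> v \<in> A \<Longrightarrow> same_cluster {c0, A - c0} u v \<longleftrightarrow> (u \<in> c0 \<longleftrightarrow> v \<in> c0)"
proof -
  have ne: "c0 \<noteq> A - c0" using assms by blast
  show "k_clustering 2 {c0, A - c0} A"
    unfolding k_clustering_def clustering_def using assms ne by auto
  fix u v assume "u \<in> A" "v \<in> A"
  then show "same_cluster {c0, A - c0} u v \<longleftrightarrow> (u \<in> c0 \<longleftrightarrow> v \<in> c0)"
    unfolding same_cluster_def by auto
qed

lemma two_clust_to:
  assumes "k_clustering 2 C A" "q \<in> A"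
  shows "\<exists>c0. q \<in> c0 \<and> c0 \<subseteq> A \<and> c0 \<noteq> A \<and>
     (\<forall>u\<in>A. \<forall>v\<in>A. same_cluster C u v \<longleftrightarrow> (u \<in> c0 \<longleftrightarrow> v \<in> c0))"
proof -
  from assms(1) have cl: "clustering C A" and "card C = 2"
    unfolding k_clustering_def by auto
  then obtain c0 c1 where C: "C = {c0, c1}" "c0 \<noteq> c1"
    by (meson card_2_iff)
  from cl C have ne: "c0 \<noteq> {}" "c1 \<noteq> {}" and dj: "c0 \<inter> c1 = {}" and un: "c0 \<union> c1 = A"
    unfolding clustering_def by auto
  show ?thesis
  proof (cases "q \<in> c0")
    case True
    show ?thesis
      apply (rule exI[of _ c0])
      using True ne dj un C unfolding same_cluster_def by blast
  next
    case False
    then have "q \<in> c1" using un assms(2) by blast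
    show ?thesis
      apply (rule exI[of _ c1])
      using \<open>q \<in> c1\<close> ne dj un C unfolding same_cluster_def by blast
  qed
qed

theorem mainTheorem1:
  fixes xo :: "'a::metric_space" and x x' :: "nat \<Rightarrow> 'a"
    and M j :: nat and S :: "nat set"
  assumes "M > 0"
    and "M_configuration M xo x x'"
    and "j \<in> {1..M}"
    and "S \<subseteq> {1..M}"
    and "card S > 1"
  shows "(\<exists>C. k_clustering 2 C ({xo, x' j} \<union> x ` S) \<and>
              nice_clustering dist C ({xo, x' j} \<union> x ` S))
         \<longleftrightarrow> j \<notin> S"
proof -
  define A where "A = {xo, x' j} \<union> x ` S"
  note cfg0 = assms(2)[unfolded M_configuration_def]
  have c1: "\<And>i. i \<in> S \<Longrightarrow> dist xo (x i) > 3/2"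
    using cfg0 assms(4) by (meson greaterThanAtMost_iff subsetD)
  have c2: "dist xo (x' j) > 3/2"
    using cfg0 assms(3) by (meson greaterThanAtMost_iff)
  have c3: "\<And>i k. i \<in> S \<Longrightarrow> k \<in> S \<Longrightarrow> i \<noteq> k \<Longrightarrow> dist (x i) (x k) \<le> 3/2"
    using cfg0 assms(4) by (meson atLeastAtMost_iff subsetD)
  have c4: "\<And>i. i \<in> S \<Longrightarrow> i \<noteq> j \<Longrightarrow> dist (x i) (x' j) \<le> 3/2"
    using cfg0 assms(3,4) by (meson atLeastAtMost_iff subsetD)
  have c5: "j \<in> S \<Longrightarrow> dist (x j) (x' j) > dist xo (x j)"
    using cfg0 assms(4) by blast
  have F1: "\<forall>w\<in>A-{xo}. dist xo w > 3/2"
    using c1 c2 unfolding A_def by blast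
  have oA: "xo \<in> A" unfolding A_def by auto
  have "(\<exists>C. k_clustering 2 C A \<and> nice_clustering dist C A) \<longleftrightarrow> j \<notin> S"
  proof
    assume "\<exists>C. k_clustering 2 C A \<and> nice_clustering dist C A"
    then obtain C where C: "k_clustering 2 C A" "nice_clustering dist C A" by blast
    obtain c0 where c0: "xo \<in> c0" "c0 \<subseteq> A" "c0 \<noteq> A"
      and sc: "\<forall>u\<in>A. \<forall>v\<in>A. same_cluster C u v \<longleftrightarrow> (u \<in> c0 \<longleftrightarrow> v \<in> c0)"
      using two_clust_to[OF C(1) oA] by blast
    have P: "\<And>a b c. a \<in> A \<Longrightarrow> b \<in> A \<Longrightarrow> c \<in> A \<Longrightarrow> (a \<in> c0 \<longleftrightarrow> b \<in> c0) \<Longrightarrow>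
        \<not> (a \<in> c0 \<longleftrightarrow> c \<in> c0) \<Longrightarrow> dist b a < dist c a"
      using C(2) sc unfolding nice_clustering_def by blast
    show "j \<notin> S"
    proof
      assume jS: "j \<in> S"
      have "S - {j} \<noteq> {}"
      proof
        assume "S - {j} = {}"
        then have "S \<subseteq> {j}" by blast
        then have "card S \<le> 1" using card_mono[of "{j}" S] by simp
        then show False using assms(5) by simp
      qed
      then obtain k where k: "k \<in> S" "k \<noteq> j" by blast
      have F2: "\<forall>w\<in>A-{xo}. dist w (x k) \<le> 3/2"
      proof
        fix w assume w: "w \<in> A - {xo}"
        then have "w = x' j \<or> (\<exists>i\<in>S. w = x i)" unfolding A_def by auto
        then show "dist w (x k) \<le> 3/2"
        proof
          assume "w = x' j"
          then show ?thesis using c4[OF k] by (simp add: dist_commute)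
        next
          assume "\<exists>i\<in>S. w = x i"
          then obtain i where i: "i \<in> S" "w = x i" by blast
          show ?thesis
          proof (cases "i = k")
            case True then show ?thesis using i by simp
          next
            case False then show ?thesis using c3 i k by simp
          qed
        qed
      qed
      have xkA: "x k \<in> A - {xo}" using k c1[OF k(1)] unfolding A_def by auto
      show False
      proof (cases "c0 = {xo}")
        case True
        have a: "x j \<in> A" "x j \<notin> c0" using jS True c1[OF jS] unfolding A_def by auto
        have p: "x' j \<in> A" "x' j \<notin> c0" using True c2 unfolding A_def by auto
        have "dist (x' j) (x j) < dist xo (x j)"
          using P[OF a(1) p(1) oA] a p True by simp
        moreover have "dist (x j) (x' j) > dist xo (x j)" using c5 jS by auto
        ultimately show False by (simp add: dist_commute)
      next
        case False
        then obtain w where w: "w \<in> c0" "w \<noteq> xo" using c0 by blast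
        then have wA: "w \<in> A - {xo}" using c0 by auto
        have "x k \<in> c0"
        proof (rule ccontr)
          assume "x k \<notin> c0"
          then have "dist xo w < dist (x k) w"
            using P[of w xo "x k"] wA xkA w c0 by auto
          moreover have "dist (x k) w \<le> 3/2" using F2 wA by (simp add: dist_commute)
          moreover have "dist xo w > 3/2" using F1 wA by auto
          ultimately show False by simp
        qed
        have "A \<subseteq> c0"
        proof
          fix u assume uA: "u \<in> A"
          show "u \<in> c0"
          proof (cases "u = xo")
            case True then show ?thesis using c0 by simp
          next
            case False
            show ?thesis
            proof (rule ccontr)
              assume "u \<notin> c0"
              then have "dist xo (x k) < dist u (x k)"
                using P[of "x k" xo u] uA xkA \<open>x k \<in> c0\<close> c0 by auto
              moreover have "dist u (x k) \<le> 3/2" using F2 uA False by auto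
              moreover have "dist xo (x k) > 3/2" using F1 xkA by auto
              ultimately show False by simp
            qed
          qed
        qed
        then show False using c0 by blast
      qed
    qed
  next
    assume jS: "j \<notin> S"
    have F2: "\<forall>u\<in>A-{xo}. \<forall>v\<in>A-{xo}. dist u v \<le> 3/2"
    proof (intro ballI)
      fix u v assume u: "u \<in> A - {xo}" and v: "v \<in> A - {xo}"
      show "dist u v \<le> 3/2"
      proof (cases "u = v")
        case True then show ?thesis by simp
      next
        case ne: False
        from u v have U: "u = x' j \<or> (\<exists>i\<in>S. u = x i)" and V: "v = x' j \<or> (\<exists>i\<in>S. v = x i)"
          unfolding A_def by auto
        show ?thesis
        proof (cases "u = x' j")
          case True
          with V ne obtain i where i: "i \<in> S" "v = x i" by auto
          with jS have "i \<noteq> j" by auto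
          then show ?thesis using c4 i True by (simp add: dist_commute)
        next
          case False
          with U obtain i where i: "i \<in> S" "u = x i" by auto
          show ?thesis
          proof (cases "v = x' j")
            case True
            with jS i have "i \<noteq> j" by auto
            then show ?thesis using c4 i True by simp
          next
            case False
            with V obtain l where l: "l \<in> S" "v = x l" by auto
            with i ne have "i \<noteq> l" by auto
            then show ?thesis using c3 i l by simp
          qed
        qed
      qed
    qed
    have pA: "x' j \<in> A" unfolding A_def by auto
    have pno: "x' j \<noteq> xo" using c2 by auto
    have c0: "xo \<in> {xo}" "{xo} \<subseteq> A" "{xo} \<noteq> A" using oA pA pno by auto
    note T = two_clust_from[OF c0]
    show "\<exists>C. k_clustering 2 C A \<and> nice_clustering dist C A"
    proof (intro exI conjI)
      show "k_clustering 2 {{xo}, A - {xo}} A" by (rule T(1))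
      show "nice_clustering dist {{xo}, A - {xo}} A"
        unfolding nice_clustering_def
      proof (intro conjI ballI impI)
        show "clustering {{xo}, A - {xo}} A" using T(1) unfolding k_clustering_def by simp
        fix a b c assume abc: "a \<in> A" "b \<in> A" "c \<in> A"
          and h: "same_cluster {{xo}, A - {xo}} a b \<and> \<not> same_cluster {{xo}, A - {xo}} a c"
        then have h': "(a = xo \<longleftrightarrow> b = xo)" "\<not> (a = xo \<longleftrightarrow> c = xo)"
          using T(2)[of a b] T(2)[of a c] by auto
        show "dist b a < dist c a"
        proof (cases "a = xo")
          case True
          then show ?thesis using h' abc F1 by (auto simp: dist_commute)
        next
          case False
          then have "c = xo" "b \<noteq> xo" using h' by auto
          then have "dist b a \<le> 3/2" "dist c a > 3/2"
            using F1 F2 abc False by (auto simp: dist_commute)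
          then show ?thesis by simp
        qed
      qed
    qed
  qed
  then show ?thesis unfolding A_def .
qed

end
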